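(* Let $M$ be a smooth $2n$-dimensional manifold, $\pi:E\to M$ the bundle of almost-complex structures, $\theta_1=j^1_pS\in J^1\pi$, $\theta_0=S(p)$. For any two horizontal subspaces $H,\tilde H\subset\mathcal A_{\theta_1}$ one has $\omega_H-\omega_{\tilde H}\in\partial_{1,1}(g_{\theta_0}\otimes T_p^*M)$. Consequently the class $$\chi(\theta_1)=\omega_H+\partial_{1,1}(g_{\theta_0}\otimes T_p^*M)\in H^{0,2}(g_{\theta_0})$$ does not depend on the choice of the horizontal subspace $H$ of $\mathcal A_{\theta_1}$.
   Context: $\tau:TM\otimes T^*M\to M$ is the bundle of $(1,1)$-tensors, $E=\{\theta:\theta^2=-\mathrm{id}\}$, $\pi=\tau|_E$, $J^1\pi$ its $1$-jet bundle. For a vector field $X$, $X^{(0)}$ is the vector field on $TM\otimes T^*M$ generated by the natural lift of its flow (conjugation of $(1,1)$-tensors by the differential); in coordinates $X^{(0)}=X^i\partial_{x^i}+(\partial_sX^i\,u^s_j-u^i_s\,\partial_jX^s)\partial_{u^i_j}$. $\mathcal K_{\theta_1}$ is the tangent space at $\theta_0$ to the image of $S$; $\mathcal A_{\theta_1}=\{j^1_pX: X^{(0)}_{\theta_0}\in\mathcal K_{\theta_1}\}$, a subspace of the space $J^1_p\xi$ of $1$-jets at $p$ of vector fields; $\xi_{1,0}:J^1_p\xi\to T_pM$, $j^1_pX\mapsto X_p$. A $2n$-dimensional $H\subset\mathcal A_{\theta_1}$ is horizontal if $\xi_{1,0}|_H$ is an isomorphism onto $T_pM$. The bracket $[j^1_pX,j^1_pY]=[X,Y]_p$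 is a well-defined bilinear map $J^1_p\xi\times J^1_p\xi\to T_pM$, and $\omega_H\in T_pM\otimes\wedge^2T_p^*M$ is $\omega_H(X_p,Y_p)=[(\xi_{1,0}|_H)^{-1}X_p,(\xi_{1,0}|_H)^{-1}Y_p]$. $g_{\theta_0}=\{A\in\mathrm{End}(T_pM):A\theta_0=\theta_0A\}$; $\partial_{1,1}:g_{\theta_0}\otimes T_p^*M\to T_pM\otimes\wedge^2T_p^*M$, $\partial_{1,1}(h)(X,Y)=h(X)(Y)-h(Y)(X)$; $H^{0,2}(g_{\theta_0})=(T_pM\otimes\wedge^2T_p^*M)/\partial_{1,1}(g_{\theta_0}\otimes T_p^*M)$. *)

theory Defs
  imports "HOL-Analysis.Analysis"
begin

text \<open>Everything is pointwise at p, in a chart: T_pM = real^'n, (1,1)-tensors at p are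
  matrices real^'n^'n. A 1-jet at p of a vector field X is the pair (X p, DX p) where the
  matrix entry (DX p) $ i $ s is the partial derivative d_s X^i at p.\<close>

type_synonym 'n jet1 = "(real^'n) \<times> (real^'n^'n)"

definition xi10 :: "'n::finite jet1 \<Rightarrow> real^'n" where
  "xi10 j = fst j"

definition jet_bracket :: "'n::finite jet1 \<Rightarrow> 'n jet1 \<Rightarrow> real^'n" where
  "jet_bracket j k = (snd k *v fst j) - (snd j *v fst k)"

text \<open>X^(0) at theta0, in coordinates (x,u): (X^i, d_s X^i u^s_j - u^i_s d_j X^s)\<close>
definition natural_lift :: "real^'n^'n \<Rightarrow> 'n::finite jet1 \<Rightarrow> (real^'n) \<times> (real^'n^'n)" where
  "natural_lift \<theta>0 j = (fst j, snd j ** \<theta>0 - \<theta>0 ** snd j)"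

text \<open>K: tangent space at theta0 = S p of the image x |-> (x, S x) of the section S\<close>
definition K_space :: "(real^'n \<Rightarrow> real^'n^'n) \<Rightarrow> real^'n::finite \<Rightarrow> ((real^'n) \<times> (real^'n^'n)) set" where
  "K_space S p = range (\<lambda>v. (v, frechet_derivative S (at p) v))"

definition A_space :: "(real^'n \<Rightarrow> real^'n^'n) \<Rightarrow> real^'n::finite \<Rightarrow> 'n jet1 set" where
  "A_space S p = {j. natural_lift (S p) j \<in> K_space S p}"

definition horizontal :: "(real^'n \<Rightarrow> real^'n^'n) \<Rightarrow> real^'n::finite \<Rightarrow> 'n jet1 set \<Rightarrow> bool" where
  "horizontal S p H \<longleftrightarrow> subspace H \<and> H \<subseteq> A_space S p \<and> dim H = CARD('n)
      \<and> bij_betw xi10 H (UNIV :: (real^'n) set)"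

definition omega :: "'n::finite jet1 set \<Rightarrow> real^'n \<Rightarrow> real^'n \<Rightarrow> real^'n" where
  "omega H v w = jet_bracket (inv_into H xi10 v) (inv_into H xi10 w)"

text \<open>g_theta0 tensor T_p^*M: linear maps h from T_pM into g_theta0\<close>
definition g_tensor :: "real^'n^'n \<Rightarrow> (real^'n::finite \<Rightarrow> real^'n^'n) set" where
  "g_tensor \<theta>0 = {h. linear h \<and> (\<forall>v. h v ** \<theta>0 = \<theta>0 ** h v)}"

definition d11 :: "(real^'n::finite \<Rightarrow> real^'n^'n) \<Rightarrow> real^'n \<Rightarrow> real^'n \<Rightarrow> real^'n" where
  "d11 h X Y = h X *v Y - h Y *v X"

text \<open>The class in H^{0,2}: the coset omega + d11(g tensor T^*)\<close>
definition H02_class :: "real^'n^'n \<Rightarrow> (real^'n::finite \<Rightarrow> real^'n \<Rightarrow> real^'n)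
     \<Rightarrow> (real^'n \<Rightarrow> real^'n \<Rightarrow> real^'n) set" where
  "H02_class \<theta>0 \<omega> = {\<lambda>v w. \<omega> v w + d11 h v w | h. h \<in> g_tensor \<theta>0}"

end

theory Submission
  imports Defs
begin

lemma hor_inv:
  assumes "horizontal S p H"
  shows "inv_into H xi10 v \<in> H" "xi10 (inv_into H xi10 v) = v"
  using assms unfolding horizontal_def
  by (auto intro: inv_into_into bij_betw_inv_into_right simp: bij_betw_def)

lemma hor_fst:
  assumes "horizontal S p H"
  shows "fst (inv_into H xi10 v) = v"
  using hor_inv(2)[OF assms] by (simp add: xi10_def)

lemma hor_eq:
  assumes "horizontal S p H"
  shows "inv_into H xi10 v = (v, snd (inv_into H xi10 v))"
  using hor_fst[OF assms, of v] by (metis prod.collapse)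

lemma hor_lin:
  assumes "horizontal S p H"
  shows "linear (\<lambda>v. snd (inv_into H xi10 v))"
proof -
  have sub: "subspace H" and inj: "inj_on xi10 H" using assms
    unfolding horizontal_def bij_betw_def by auto
  note I = hor_inv[OF assms] hor_fst[OF assms]
  have add: "inv_into H xi10 (v + w) = inv_into H xi10 v + inv_into H xi10 w" for v w
    by (rule inv_into_f_eq[OF inj]) (auto simp: I subspace_add[OF sub] xi10_def)
  have sc: "inv_into H xi10 (c *\<^sub>R v) = c *\<^sub>R inv_into H xi10 v" for c v
    by (rule inv_into_f_eq[OF inj]) (auto simp: I subspace_scale[OF sub] xi10_def)
  show ?thesis
    by (rule linearI) (simp_all add: add sc)
qed

lemma hor_A:
  assumes "horizontal S p H"
  shows "snd (inv_into H xi10 v) ** S p - S p ** snd (inv_into H xi10 v)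
         = frechet_derivative S (at p) v"
proof -
  have "inv_into H xi10 v \<in> A_space S p"
    using hor_inv[OF assms] assms unfolding horizontal_def by auto
  then have "(fst (inv_into H xi10 v), snd (inv_into H xi10 v) ** S p - S p ** snd (inv_into H xi10 v)) \<in> K_space S p"
    unfolding A_space_def natural_lift_def by simp
  then show ?thesis unfolding K_space_def hor_fst[OF assms] by auto
qed

lemma mm_add_r: "((A::real^'n::finite^'m::finite) + B) ** C = A ** C + B ** C"
  by (simp add: vec_eq_iff matrix_matrix_mult_def sum.distrib distrib_right)
lemma mm_sub_r: "((A::real^'n::finite^'m::finite) - B) ** C = A ** C - B ** C"
  by (simp add: vec_eq_iff matrix_matrix_mult_def sum_subtractf left_diff_distrib)
lemma mm_sub_l: "(C::real^'n::finite^'m::finite) ** (A - B) = C ** A - C ** B"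
  by (simp add: vec_eq_iff matrix_matrix_mult_def sum_subtractf right_diff_distrib)
lemma mm_neg_r: "(- (A::real^'n::finite^'m::finite)) ** C = - (A ** C)"
  by (simp add: vec_eq_iff matrix_matrix_mult_def sum_negf)
lemma mm_neg_l: "(C::real^'n::finite^'m::finite) ** (- A) = - (C ** A)"
  by (simp add: vec_eq_iff matrix_matrix_mult_def sum_negf)
lemma mv_neg: "(- (A::real^'n::finite^'m::finite)) *v x = - (A *v x)"
  by (simp add: vec_eq_iff matrix_vector_mult_def sum_negf)

lemma d11_add: "d11 (\<lambda>v. h v + k v) v w = d11 h v w + d11 k v w"
  unfolding d11_def by (simp add: matrix_vector_mult_add_rdistrib)

lemma g_add: "h \<in> g_tensor t \<Longrightarrow> k \<in> g_tensor t \<Longrightarrow> (\<lambda>v. h v + k v) \<in> g_tensor t"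
  unfolding g_tensor_def
  by (auto intro: linear_compose_add simp: mm_add_r matrix_add_ldistrib)

lemma grp: "(a::'a::ab_group_add) - b = c - d \<Longrightarrow> c - a = d - b"
  by (simp add: algebra_simps)

theorem mainTheorem5:
  fixes S :: "real^'n::finite \<Rightarrow> real^'n^'n" and U :: "(real^'n) set" and p :: "real^'n"
    and H H' :: "'n jet1 set"
  assumes "even CARD('n)"
    and "open U" and "p \<in> U"
    and "S differentiable_on U"
    and "\<forall>x\<in>U. S x ** S x = - mat 1"
    and "horizontal S p H" and "horizontal S p H'"
  shows "(\<exists>h\<in>g_tensor (S p). \<forall>v w. omega H v w - omega H' v w = d11 h v w)
       \<and> H02_class (S p) (omega H) = H02_class (S p) (omega H')"
proof -
  define L where "L v = snd (inv_into H xi10 v)" for v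
  define L' where "L' v = snd (inv_into H' xi10 v)" for v
  define h where "h v = L' v - L v" for v
  have hg: "h \<in> g_tensor (S p)"
  proof -
    have "linear h" unfolding h_def L_def L'_def
      using hor_lin[OF assms(6)] hor_lin[OF assms(7)] by (intro linear_compose_sub)
    moreover have "h v ** S p = S p ** h v" for v
    proof -
      have "L v ** S p - S p ** L v = L' v ** S p - S p ** L' v"
        using hor_A[OF assms(6), of v] hor_A[OF assms(7), of v] unfolding L_def L'_def by simp
      then have "L' v ** S p - L v ** S p = S p ** L' v - S p ** L v" by (rule grp)
      then show ?thesis unfolding h_def by (simp add: mm_sub_r mm_sub_l)
    qed
    ultimately show ?thesis unfolding g_tensor_def by auto
  qed
  have om: "omega H v w = L w *v v - L v *v w" "omega H' v w = L' w *v v - L' v *v w" for v w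
    unfolding omega_def jet_bracket_def L_def L'_def hor_fst[OF assms(6)] hor_fst[OF assms(7)]
    by simp_all
  have eq: "omega H v w - omega H' v w = d11 h v w" for v w
    unfolding om d11_def h_def matrix_vector_mult_diff_rdistrib by simp
  have hn: "(\<lambda>v. - h v) \<in> g_tensor (S p)"
    using hg unfolding g_tensor_def
    by (auto intro: linear_compose_neg simp: mm_neg_r mm_neg_l)
  have dn: "d11 (\<lambda>v. - h v) v w = - d11 h v w" for v w
    unfolding d11_def by (simp add: mv_neg)
  have c1: "H02_class (S p) (omega H) \<subseteq> H02_class (S p) (omega H')"
  proof
    fix f assume "f \<in> H02_class (S p) (omega H)"
    then obtain k where k: "k \<in> g_tensor (S p)" "f = (\<lambda>v w. omega H v w + d11 k v w)"
      unfolding H02_class_def by auto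
    have "f = (\<lambda>v w. omega H' v w + d11 (\<lambda>v. h v + k v) v w)"
      unfolding k(2) fun_eq_iff d11_add
    proof (intro allI)
      fix v w
      have "omega H v w = omega H' v w + d11 h v w" using eq[of v w] by (simp add: algebra_simps)
      then show "omega H v w + d11 k v w = omega H' v w + (d11 h v w + d11 k v w)"
        by simp
    qed
    then show "f \<in> H02_class (S p) (omega H')"
      unfolding H02_class_def using g_add[OF hg k(1)] by blast
  qed
  have c2: "H02_class (S p) (omega H') \<subseteq> H02_class (S p) (omega H)"
  proof
    fix f assume "f \<in> H02_class (S p) (omega H')"
    then obtain k where k: "k \<in> g_tensor (S p)" "f = (\<lambda>v w. omega H' v w + d11 k v w)"
      unfolding H02_class_def by auto
    have "f = (\<lambda>v w. omega H v w + d11 (\<lambda>v. - h v + k v) v w)"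
      unfolding k(2) fun_eq_iff d11_add
    proof (intro allI)
      fix v w
      have "omega H' v w = omega H v w + d11 (\<lambda>v. - h v) v w" using eq[of v w] dn[of v w] by (simp add: algebra_simps)
      then show "omega H' v w + d11 k v w = omega H v w + (d11 (\<lambda>v. - h v) v w + d11 k v w)"
        by simp
    qed
    then show "f \<in> H02_class (S p) (omega H)"
      unfolding H02_class_def using g_add[OF hn k(1)] by blast
  qed
  show ?thesis using hg eq c1 c2 by blast
qed

end
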